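(* With the coupled chains $(X,Y)$ described in the context, for every $n\in\mathbb{Z}_+$, $$\mathbb{P}[\widehat Z(n)>0]\le\frac{2^{N+1}n}{N!},\qquad \mathbb{P}[\widetilde Z(n)>0]\le\frac{2^{N+1}n}{N!},$$ where $\widetilde Z(n)=\sum_{k=0}^{n-1}\mathbf{1}_{\{X(k)\le Y(k),\,X(k+1)>Y(k+1)\}}$ and $\widehat Z(n)=\sum_{k=0}^{n-1}\mathbf{1}_{\{X(k)\ge Y(k),\,X(k+1)<Y(k+1)\}}$.
   Context: Let $N\ge 5$. For $\sigma\in\mathcal{S}_N$ let $\eta_1(\sigma)$, $\eta_2(\sigma)$ be its numbers of fixed points and 2-cycles, $\nu$ the uniform measure on $\mathcal{S}_N$, $\pi_N$ the law of $\eta_1$ under $\nu$, and $p(x)=\mathbb{E}_\nu[\eta_2\mid\eta_1=x]$. Let $\check\pi$ be $\pi_N$ conditioned on $\{0,\dots,N-4\}$ and $\zeta$ the Poisson(1) law conditioned on $\{0,\dots,N-4\}$. On $\{0,\dots,N-4\}$ define birth–death kernels $\check P$ and $R$ by: for $x\ne y$, $\check P(x,x-1)=R(x,x-1)=\frac{x(N-x)}{N(N-1)}$, $\check P(x,x+1)=\frac{N-x-2p(x)}{N(N-1)}$ for $x\le N-5$, $R(x,x+1)=\frac{N-x-1}{N(N-1)}$ for $x\le N-5$, all other off-diagonal entries $0$, diagonal entries chosen so rows sum to 1. Let $(U(n))_{n\ge0}$ be i.i.d. uniform on $[0,1]$. The chain $X$ starts from $X(0)\sim\check\pi$, $Y$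 from $Y(0)\sim\zeta$ (coupled arbitrarily at time 0), and for each $n$: $X(n+1)=X(n)-1$ if $U(n)<\check P(X(n),X(n)-1)$, $X(n+1)=X(n)$ if $\check P(X(n),X(n)-1)\le U(n)<\check P(X(n),X(n)-1)+\check P(X(n),X(n))$, and $X(n+1)=X(n)+1$ otherwise; $Y$ is updated by the same rule with $R$ in place of $\check P$ and the same $U(n)$. *)

theory Defs
  imports "HOL-Probability.Probability"
begin

definition perms :: "nat \<Rightarrow> (nat \<Rightarrow> nat) set" where
  "perms N = {\<sigma>. \<sigma> permutes {..<N}}"

definition eta1 :: "nat \<Rightarrow> (nat \<Rightarrow> nat) \<Rightarrow> nat" where
  "eta1 N \<sigma> = card {i \<in> {..<N}. \<sigma> i = i}"

definition eta2 :: "nat \<Rightarrow> (nat \<Rightarrow> nat) \<Rightarrow> nat" where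
  "eta2 N \<sigma> = card {i \<in> {..<N}. \<sigma> i \<noteq> i \<and> \<sigma> (\<sigma> i) = i} div 2"

definition piN :: "nat \<Rightarrow> nat \<Rightarrow> real" where
  "piN N x = real (card {\<sigma> \<in> perms N. eta1 N \<sigma> = x}) / real (card (perms N))"

definition pcond :: "nat \<Rightarrow> nat \<Rightarrow> real" where
  "pcond N x = (\<Sum>\<sigma> \<in> {\<sigma> \<in> perms N. eta1 N \<sigma> = x}. real (eta2 N \<sigma>))
                / real (card {\<sigma> \<in> perms N. eta1 N \<sigma> = x})"

definition checkpi :: "nat \<Rightarrow> nat \<Rightarrow> real" where
  "checkpi N x = (if x \<le> N - 4 then piN N x / (\<Sum>y\<le>N - 4. piN N y) else 0)"

definition zeta :: "nat \<Rightarrow> nat \<Rightarrow> real" where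
  "zeta N x = (if x \<le> N - 4 then (exp (-1) / fact x) / (\<Sum>y\<le>N - 4. exp (-1) / fact y) else 0)"

definition kdown :: "nat \<Rightarrow> nat \<Rightarrow> real" where
  "kdown N x = real x * (real N - real x) / (real N * (real N - 1))"

definition Pup :: "nat \<Rightarrow> nat \<Rightarrow> real" where
  "Pup N x = (if x + 5 \<le> N then (real N - real x - 2 * pcond N x) / (real N * (real N - 1)) else 0)"

definition Rup :: "nat \<Rightarrow> nat \<Rightarrow> real" where
  "Rup N x = (if x + 5 \<le> N then (real N - real x - 1) / (real N * (real N - 1)) else 0)"

definition step :: "(nat \<Rightarrow> real) \<Rightarrow> (nat \<Rightarrow> real) \<Rightarrow> nat \<Rightarrow> real \<Rightarrow> nat" where
  "step dn up x u =
     (if u < dn x then x - 1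
      else if u < dn x + (1 - dn x - up x) then x
      else x + 1)"

primrec chain :: "(nat \<Rightarrow> real) \<Rightarrow> (nat \<Rightarrow> real) \<Rightarrow> nat \<Rightarrow> (nat \<Rightarrow> real) \<Rightarrow> nat \<Rightarrow> nat" where
  "chain dn up x0 u 0 = x0"
| "chain dn up x0 u (Suc n) = step dn up (chain dn up x0 u n) (u n)"

end

theory Submission
  imports Defs
begin



fun D :: "nat \<Rightarrow> nat" where
  "D 0 = 1" | "D (Suc 0) = 0" | "D (Suc (Suc n)) = Suc n * (D n + D (Suc n))"

lemma D_rec1: "int (D (Suc n)) = int (Suc n) * int (D n) + (-1)^(Suc n)"
proof (induction n rule: nat_less_induct)
  case (1 n)
  show ?case
  proof (cases n)
    case 0 then show ?thesis by simp
  next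
    case (Suc m)
    have IH: "int (D (Suc m)) = int (Suc m) * int (D m) + (-1)^(Suc m)" using 1 Suc by auto
    have "int (D (Suc n)) = int (Suc m) * (int (D m) + int (D (Suc m)))" using Suc by (simp add: algebra_simps)
    also have "\<dots> = int (Suc n) * int (D n) + (-1)^(Suc n)"
      using IH Suc by (simp add: algebra_simps)
    finally show ?thesis .
  qed
qed

lemma D_diff: "\<bar>int (D (Suc (Suc n))) - int (Suc (Suc n)) * int (Suc n) * int (D n)\<bar> = int (Suc n)"
proof -
  have a: "int (D (Suc (Suc n))) = int (Suc (Suc n)) * int (D (Suc n)) + (-1)^(Suc (Suc n))" by (rule D_rec1)
  have b: "int (D (Suc n)) = int (Suc n) * int (D n) + (-1)^(Suc n)" by (rule D_rec1)
  define s :: int where "s = (-1)^n"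
  have s1: "(-1::int)^(Suc n) = - s" and s2: "(-1::int)^(Suc (Suc n)) = s" by (simp_all add: s_def)
  have "int (D (Suc (Suc n))) - int (Suc (Suc n)) * int (Suc n) * int (D n) = - int (Suc n) * s"
    unfolding a b s1 s2 by (simp add: algebra_simps)
  moreover have "\<bar>s\<bar> = 1" by (simp add: s_def power_abs)
  ultimately show ?thesis by (simp add: abs_mult)
qed

lemma D_lower: "n \<ge> 2 \<Longrightarrow> 3 * D n \<ge> fact n"
proof (induction n rule: nat_less_induct)
  case (1 n)
  show ?case
  proof (cases "n \<le> 3")
    case True
    then have "n = 2 \<or> n = 3" using 1 by auto
    then show ?thesis by (auto simp: numeral_eq_Suc)
  next
    case False
    then obtain m where m: "n = Suc (Suc m)" "m \<ge> 2" by (metis Suc_le_D add_2_eq_Suc le_add2 numeral_3_eq_3 not_less_eq_eq numeral_2_eq_2 le_add_diff_inverse2 nat_le_linear)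
    have h1: "3 * D m \<ge> fact m" using 1 m by auto
    have h2: "3 * D (Suc m) \<ge> fact (Suc m)" using 1 m by auto
    have "fact n = Suc (Suc m) * (Suc m * fact m)" using m by simp
    also have "\<dots> = Suc m * (fact m + fact (Suc m))" by (simp add: algebra_simps)
    also have "\<dots> \<le> Suc m * (3 * D m + 3 * D (Suc m))" using h1 h2 by (intro mult_le_mono2 add_mono) auto
    also have "\<dots> = 3 * D n" using m by simp
    finally show ?thesis .
  qed
qed

lemma D_pos: "n \<ge> 2 \<Longrightarrow> D n > 0"
  using D_lower[of n] by (metis fact_gt_zero gr0I le_zero_eq mult_0_right not_le)

lemma sumD: "(\<Sum>k\<le>n. (n choose k) * D k) = fact n"
proof (induction n)
  case 0 then show ?case by simp
next
  case (Suc n)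
  have "int (\<Sum>k\<le>Suc n. (Suc n choose k) * D k) = (\<Sum>k\<le>Suc n. int (Suc n choose k) * int (D k))"
    by simp
  also have "\<dots> = int (D 0) + (\<Sum>k\<le>n. int (Suc n choose Suc k) * int (D (Suc k)))"
    by (subst sum.atMost_Suc_shift) (simp del: binomial_Suc_Suc sum.atMost_Suc)
  also have "\<dots> = 1 + (\<Sum>k\<le>n. int (Suc n choose Suc k) * (int (Suc k) * int (D k) + (-1)^(Suc k)))"
    by (simp add: D_rec1 del: binomial_Suc_Suc)
  also have "\<dots> = 1 + (\<Sum>k\<le>n. int (Suc n) * (int (n choose k) * int (D k))) + (\<Sum>k\<le>n. int (Suc n choose Suc k) * (-1)^(Suc k))"
  proof -
    have "\<And>k. int (Suc n choose Suc k) * int (Suc k) = int (Suc n) * int (n choose k)"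
      by (metis Suc_times_binomial_eq mult.commute of_nat_mult Suc_times_binomial)
    then have "\<And>k. int (Suc n choose Suc k) * (int (Suc k) * int (D k) + (-1)^(Suc k)) = int (Suc n) * (int (n choose k) * int (D k)) + int (Suc n choose Suc k) * (-1)^(Suc k)"
      by (simp only: distrib_left mult.assoc[symmetric])
    then show ?thesis by (simp only: sum.distrib add.assoc)
  qed
  also have "(\<Sum>k\<le>n. int (Suc n choose Suc k) * (-1)^(Suc k)) = -1"
  proof -
    have "(\<Sum>k\<le>Suc n. (-1)^k * int (Suc n choose k)) = 0"
      using choose_alternating_sum[of "Suc n"] by simp
    then have "1 + (\<Sum>k\<le>n. (-1)^(Suc k) * int (Suc n choose Suc k)) = 0"
      by (subst (asm) sum.atMost_Suc_shift) (simp del: binomial_Suc_Suc sum.atMost_Suc)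
    then show ?thesis by (simp add: mult.commute del: binomial_Suc_Suc)
  qed
  also have "(\<Sum>k\<le>n. int (Suc n) * (int (n choose k) * int (D k))) = int (Suc n) * int (fact n)"
    using Suc by (simp add: sum_distrib_left[symmetric] flip: of_nat_mult of_nat_sum)
  finally have "int (\<Sum>k\<le>Suc n. (Suc n choose k) * D k) = int (fact (Suc n))"
    by (simp add: algebra_simps)
  then show ?case by (simp only: of_nat_eq_iff)
qed




definition dset :: "nat set \<Rightarrow> (nat \<Rightarrow> nat) set" where
  "dset B = {\<sigma>. \<sigma> permutes B \<and> (\<forall>i\<in>B. \<sigma> i \<noteq> i)}"

lemma finite_dset: "finite B \<Longrightarrow> finite (dset B)"
  unfolding dset_def by (rule finite_subset[OF _ finite_permutations]) auto

lemma permutes_moved: "\<sigma> permutes B \<Longrightarrow> \<sigma> permutes {i\<in>B. \<sigma> i \<noteq> i}"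
  by (rule permutes_superset) auto

lemma perm_split: "{\<sigma>. \<sigma> permutes B} = (\<Union>C\<in>Pow B. dset C)"
proof (rule set_eqI)
  fix \<sigma>
  show "\<sigma> \<in> {\<sigma>. \<sigma> permutes B} \<longleftrightarrow> \<sigma> \<in> (\<Union>C\<in>Pow B. dset C)"
  proof
    assume "\<sigma> \<in> {\<sigma>. \<sigma> permutes B}"
    then have s: "\<sigma> permutes B" by simp
    show "\<sigma> \<in> (\<Union>C\<in>Pow B. dset C)"
      by (rule UN_I[of "{i\<in>B. \<sigma> i \<noteq> i}"]) (auto simp: dset_def permutes_moved[OF s])
  next
    assume "\<sigma> \<in> (\<Union>C\<in>Pow B. dset C)"
    then obtain C where "C \<subseteq> B" "\<sigma> permutes C" by (auto simp: dset_def)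
    then show "\<sigma> \<in> {\<sigma>. \<sigma> permutes B}" using permutes_subset[of \<sigma> C B] by simp
  qed
qed

lemma dset_moved: "\<sigma> \<in> dset C \<Longrightarrow> C \<subseteq> B \<Longrightarrow> {i\<in>B. \<sigma> i \<noteq> i} = C"
  unfolding dset_def by (auto dest: permutes_not_in)

lemma dset_disj: "C \<subseteq> B \<Longrightarrow> C' \<subseteq> B \<Longrightarrow> C \<noteq> C' \<Longrightarrow> dset C \<inter> dset C' = {}"
proof -
  assume a: "C \<subseteq> B" "C' \<subseteq> B" "C \<noteq> C'"
  show ?thesis
  proof (rule ccontr)
    assume "dset C \<inter> dset C' \<noteq> {}"
    then obtain \<sigma> where s: "\<sigma> \<in> dset C" "\<sigma> \<in> dset C'" by blast
    have "{i\<in>B. \<sigma> i \<noteq> i} = C" by (rule dset_moved[OF s(1) a(1)])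
    moreover have "{i\<in>B. \<sigma> i \<noteq> i} = C'" by (rule dset_moved[OF s(2) a(2)])
    ultimately show False using a by simp
  qed
qed

lemma sum_Pow_card:
  assumes "finite B"
  shows "(\<Sum>C\<in>Pow B. f (card C)) = (\<Sum>k\<le>card B. (card B choose k) * f k)"
proof -
  have "(\<Sum>C\<in>Pow B. f (card C)) = (\<Sum>k\<le>card B. \<Sum>C\<in>{C. C \<in> Pow B \<and> card C = k}. f (card C))"
    using assms by (intro sum.group[symmetric]) (auto intro: card_mono)
  also have "\<dots> = (\<Sum>k\<le>card B. (card B choose k) * f k)"
  proof (rule sum.cong[OF refl])
    fix k
    have "(\<Sum>C\<in>{C. C \<in> Pow B \<and> card C = k}. f (card C)) = (\<Sum>C\<in>{C. C \<subseteq> B \<and> card C = k}. f k)"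
      by (rule sum.cong) auto
    also have "\<dots> = (card B choose k) * f k" using n_subsets[OF assms, of k] by simp
    finally show "(\<Sum>C\<in>{C. C \<in> Pow B \<and> card C = k}. f (card C)) = (card B choose k) * f k" .
  qed
  finally show ?thesis .
qed

lemma card_dset: "finite B \<Longrightarrow> card (dset B) = D (card B)"
proof (induction "card B" arbitrary: B rule: less_induct)
  case less
  have fin: "finite (Pow B)" using less by simp
  have "fact (card B) = card {\<sigma>. \<sigma> permutes B}" using card_permutations[OF refl less(2)] by simp
  also have "\<dots> = (\<Sum>C\<in>Pow B. card (dset C))"
    unfolding perm_split
  proof (intro card_UN_disjoint)
    show "finite (Pow B)" using fin .
    show "\<forall>i\<in>Pow B. finite (dset i)" using less(2) by (auto intro: finite_dset finite_subset)
    show "\<forall>i\<in>Pow B. \<forall>j\<in>Pow B. i \<noteq> j \<longrightarrow> dset i \<inter> dset j = {}"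
      by (intro ballI impI dset_disj) auto
  qed
  also have "\<dots> = card (dset B) + (\<Sum>C\<in>Pow B - {B}. card (dset C))"
    using fin by (subst sum.remove[of _ B]) auto
  also have "(\<Sum>C\<in>Pow B - {B}. card (dset C)) = (\<Sum>C\<in>Pow B - {B}. D (card C))"
  proof (rule sum.cong[OF refl])
    fix C assume "C \<in> Pow B - {B}"
    then have "C \<subset> B" by auto
    then have "card C < card B" using less(2) by (simp add: psubset_card_mono)
    then show "card (dset C) = D (card C)" using less(1) \<open>C \<subset> B\<close> less(2)
      by (meson finite_subset psubset_imp_subset)
  qed
  finally have e1: "fact (card B) = card (dset B) + (\<Sum>C\<in>Pow B - {B}. D (card C))" .
  have "fact (card B) = (\<Sum>C\<in>Pow B. D (card C))"
    using sum_Pow_card[OF less(2), of D] sumD by simp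
  also have "\<dots> = D (card B) + (\<Sum>C\<in>Pow B - {B}. D (card C))"
    using fin by (subst sum.remove[of _ B]) auto
  finally show ?case using e1 by simp
qed

definition Fset :: "nat set \<Rightarrow> nat \<Rightarrow> (nat \<Rightarrow> nat) set" where
  "Fset A x = {\<sigma>. \<sigma> permutes A \<and> card {i\<in>A. \<sigma> i = i} = x}"

lemma card_Fset:
  assumes "finite A" "x \<le> card A"
  shows "card (Fset A x) = (card A choose x) * D (card A - x)"
proof -
  have eq: "Fset A x = (\<Union>K\<in>{K. K \<subseteq> A \<and> card K = x}. dset (A - K))"
  proof safe
    fix \<sigma> assume "\<sigma> \<in> Fset A x"
    then have s: "\<sigma> permutes A" and c: "card {i\<in>A. \<sigma> i = i} = x" by (auto simp: Fset_def)
    have "{i\<in>A. \<sigma> i \<noteq> i} = A - {i\<in>A. \<sigma> i = i}" by auto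
    then show "\<sigma> \<in> (\<Union>K\<in>{K. K \<subseteq> A \<and> card K = x}. dset (A - K))"
      using permutes_moved[OF s] c by (intro UN_I[of "{i\<in>A. \<sigma> i = i}"]) (auto simp: dset_def)
  next
    fix \<sigma> K assume K: "K \<subseteq> A" "x = card K" and d: "\<sigma> \<in> dset (A - K)"
    have "{i\<in>A. \<sigma> i = i} = K" using d K permutes_not_in[of \<sigma> "A - K"] unfolding dset_def by blast
    moreover have "\<sigma> permutes A" using d permutes_subset[OF _ Diff_subset] unfolding dset_def by blast
    ultimately show "\<sigma> \<in> Fset A (card K)" by (simp add: Fset_def)
  qed
  have "card (Fset A x) = (\<Sum>K\<in>{K. K \<subseteq> A \<and> card K = x}. card (dset (A - K)))"
    unfolding eq using assms(1)
  proof (intro card_UN_disjoint)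
    show "finite {K. K \<subseteq> A \<and> card K = x}" using assms(1) by simp
    show "\<forall>i\<in>{K. K \<subseteq> A \<and> card K = x}. finite (dset (A - i))" using assms(1) by (auto intro: finite_dset)
    show "\<forall>i\<in>{K. K \<subseteq> A \<and> card K = x}. \<forall>j\<in>{K. K \<subseteq> A \<and> card K = x}. i \<noteq> j \<longrightarrow> dset (A - i) \<inter> dset (A - j) = {}"
    proof (intro ballI impI)
      fix K K' assume K: "K \<in> {K. K \<subseteq> A \<and> card K = x}" "K' \<in> {K. K \<subseteq> A \<and> card K = x}" "K \<noteq> K'"
      have "A - (A - K) = K" "A - (A - K') = K'" using K by auto
      then have "A - K \<noteq> A - K'" using K(3) by metis
      then show "dset (A - K) \<inter> dset (A - K') = {}" by (intro dset_disj) auto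
    qed
  qed
  also have "\<dots> = (\<Sum>K\<in>{K. K \<subseteq> A \<and> card K = x}. D (card A - x))"
    using assms(1) by (intro sum.cong refl) (auto simp: card_dset card_Diff_subset finite_subset)
  also have "\<dots> = (card A choose x) * D (card A - x)" using n_subsets[OF assms(1)] by simp
  finally show ?thesis .
qed




definition Q :: "nat set \<Rightarrow> (nat \<Rightarrow> nat) \<Rightarrow> nat set" where
  "Q A \<sigma> = {i\<in>A. \<sigma> i \<noteq> i \<and> \<sigma> (\<sigma> i) = i}"

lemma pair_count:
  assumes "i \<in> A" "j \<in> A" "i \<noteq> j"
  shows "card {\<sigma>\<in>Fset A x. \<sigma> i = j \<and> \<sigma> j = i} = card (Fset (A - {i,j}) x)"
proof (rule bij_betw_same_card[of "\<lambda>\<sigma>. Transposition.transpose i j \<circ> \<sigma>"], rule bij_betw_byWitness[of _ "\<lambda>\<sigma>. Transposition.transpose i j \<circ> \<sigma>"])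
  show "\<forall>a\<in>{\<sigma> \<in> Fset A x. \<sigma> i = j \<and> \<sigma> j = i}. Transposition.transpose i j \<circ> (Transposition.transpose i j \<circ> a) = a"
    by (auto simp: fun_eq_iff)
  show "\<forall>a\<in>Fset (A - {i, j}) x. Transposition.transpose i j \<circ> (Transposition.transpose i j \<circ> a) = a"
    by (auto simp: fun_eq_iff)
  show "(\<circ>) (Transposition.transpose i j) ` {\<sigma> \<in> Fset A x. \<sigma> i = j \<and> \<sigma> j = i} \<subseteq> Fset (A - {i, j}) x"
  proof (rule image_subsetI)
    fix \<sigma> assume "\<sigma> \<in> {\<sigma> \<in> Fset A x. \<sigma> i = j \<and> \<sigma> j = i}"
    then have s: "\<sigma> \<in> Fset A x" "\<sigma> i = j" "\<sigma> j = i" by auto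
    then have p: "\<sigma> permutes A" and c: "card {k\<in>A. \<sigma> k = k} = x" by (auto simp: Fset_def)
    have p2: "Transposition.transpose i j \<circ> \<sigma> permutes A"
      using permutes_compose[OF p permutes_swap_id[OF assms(1,2)]] .
    have p3: "Transposition.transpose i j \<circ> \<sigma> permutes A - {i,j}"
      using p2 s by (intro permutes_superset[OF p2]) (auto)
    have "{k\<in>A - {i,j}. (Transposition.transpose i j \<circ> \<sigma>) k = k} = {k\<in>A. \<sigma> k = k}"
    proof (rule set_eqI, rule iffI)
      fix k assume "k \<in> {k\<in>A - {i,j}. (Transposition.transpose i j \<circ> \<sigma>) k = k}"
      then have k: "k \<in> A" "k \<noteq> i" "k \<noteq> j" "Transposition.transpose i j (\<sigma> k) = k" by auto
      then have "\<sigma> k = Transposition.transpose i j k" by (metis transpose_involutory)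
      then show "k \<in> {k\<in>A. \<sigma> k = k}" using k by simp
    next
      fix k assume "k \<in> {k\<in>A. \<sigma> k = k}"
      then have k: "k \<in> A" "\<sigma> k = k" by auto
      then have "k \<noteq> i" "k \<noteq> j" using s assms by auto
      then show "k \<in> {k\<in>A - {i,j}. (Transposition.transpose i j \<circ> \<sigma>) k = k}" using k by simp
    qed
    then show "Transposition.transpose i j \<circ> \<sigma> \<in> Fset (A - {i, j}) x" using p3 c by (simp add: Fset_def)
  qed
  show "(\<circ>) (Transposition.transpose i j) ` Fset (A - {i, j}) x \<subseteq> {\<sigma> \<in> Fset A x. \<sigma> i = j \<and> \<sigma> j = i}"
  proof (rule image_subsetI)
    fix \<tau> assume t: "\<tau> \<in> Fset (A - {i, j}) x"
    then have p: "\<tau> permutes A - {i,j}" and c: "card {k\<in>A - {i,j}. \<tau> k = k} = x" by (auto simp: Fset_def)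
    have ti: "\<tau> i = i" "\<tau> j = j" using p permutes_not_in[of \<tau> "A - {i,j}"] by auto
    have p1: "\<tau> permutes A" using permutes_subset[OF p] by blast
    have p2: "Transposition.transpose i j \<circ> \<tau> permutes A"
      using permutes_compose[OF p1 permutes_swap_id[OF assms(1,2)]] .
    have "{k\<in>A. (Transposition.transpose i j \<circ> \<tau>) k = k} = {k\<in>A - {i,j}. \<tau> k = k}"
    proof (rule set_eqI, rule iffI)
      fix k assume "k \<in> {k\<in>A. (Transposition.transpose i j \<circ> \<tau>) k = k}"
      then have k: "k \<in> A" "Transposition.transpose i j (\<tau> k) = k" by auto
      then have "k \<noteq> i" "k \<noteq> j" using ti assms by auto
      moreover have "\<tau> k = Transposition.transpose i j k" using k by (metis transpose_involutory)
      ultimately show "k \<in> {k\<in>A - {i,j}. \<tau> k = k}" using k by simp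
    next
      fix k assume "k \<in> {k\<in>A - {i,j}. \<tau> k = k}"
      then show "k \<in> {k\<in>A. (Transposition.transpose i j \<circ> \<tau>) k = k}" by simp
    qed
    then have "Transposition.transpose i j \<circ> \<tau> \<in> Fset A x" using p2 c by (simp add: Fset_def)
    moreover have "(Transposition.transpose i j \<circ> \<tau>) i = j" "(Transposition.transpose i j \<circ> \<tau>) j = i" using ti by auto
    ultimately show "Transposition.transpose i j \<circ> \<tau> \<in> {\<sigma> \<in> Fset A x. \<sigma> i = j \<and> \<sigma> j = i}" by simp
  qed
qed

lemma Q_count:
  assumes "finite A" "i \<in> A"
  shows "card {\<sigma>\<in>Fset A x. i \<in> Q A \<sigma>} = (\<Sum>j\<in>A - {i}. card {\<sigma>\<in>Fset A x. \<sigma> i = j \<and> \<sigma> j = i})"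
proof -
  have fin: "finite (Fset A x)"
    using finite_permutations[OF assms(1)] by (rule finite_subset[rotated]) (auto simp: Fset_def)
  have "{\<sigma>\<in>Fset A x. i \<in> Q A \<sigma>} = (\<Union>j\<in>A - {i}. {\<sigma>\<in>Fset A x. \<sigma> i = j \<and> \<sigma> j = i})"
  proof safe
    fix \<sigma> assume "\<sigma> \<in> Fset A x" "i \<in> Q A \<sigma>"
    moreover have "\<sigma> i \<in> A" using \<open>\<sigma> \<in> Fset A x\<close> assms(2) by (auto simp: Fset_def permutes_in_image)
    ultimately show "\<sigma> \<in> (\<Union>j\<in>A - {i}. {\<sigma>\<in>Fset A x. \<sigma> i = j \<and> \<sigma> j = i})"
      by (intro UN_I[of "\<sigma> i"]) (auto simp: Q_def)
  qed (auto simp: Q_def assms)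
  then show ?thesis using assms fin
    by (simp, intro card_UN_disjoint) (auto intro: finite_subset)
qed

lemma sum_Q:
  assumes "finite A" "x + 2 \<le> card A"
  shows "(\<Sum>\<sigma>\<in>Fset A x. card (Q A \<sigma>)) = card A * (card A - 1) * ((card A - 2) choose x) * D (card A - 2 - x)"
proof -
  have fin: "finite (Fset A x)"
    using finite_permutations[OF assms(1)] by (rule finite_subset[rotated]) (auto simp: Fset_def)
  have "(\<Sum>\<sigma>\<in>Fset A x. card (Q A \<sigma>)) = (\<Sum>\<sigma>\<in>Fset A x. \<Sum>i\<in>A. if i \<in> Q A \<sigma> then 1 else 0)"
    by (rule sum.cong[OF refl]) (simp add: Q_def assms(1) Int_def[symmetric] flip: sum.inter_filter)
  also have "\<dots> = (\<Sum>i\<in>A. \<Sum>\<sigma>\<in>Fset A x. if i \<in> Q A \<sigma> then 1 else 0)" by (rule sum.swap)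
  also have "\<dots> = (\<Sum>i\<in>A. card {\<sigma>\<in>Fset A x. i \<in> Q A \<sigma>})"
    using fin by (auto simp: sum.If_cases intro!: sum.cong arg_cong[where f=card])
  also have "\<dots> = (\<Sum>i\<in>A. \<Sum>j\<in>A - {i}. ((card A - 2) choose x) * D (card A - 2 - x))"
  proof (rule sum.cong[OF refl])
    fix i assume i: "i \<in> A"
    show "card {\<sigma>\<in>Fset A x. i \<in> Q A \<sigma>} = (\<Sum>j\<in>A - {i}. ((card A - 2) choose x) * D (card A - 2 - x))"
      unfolding Q_count[OF assms(1) i]
    proof (rule sum.cong[OF refl])
      fix j assume j: "j \<in> A - {i}"
      have c: "card (A - {i,j}) = card A - 2" using i j assms(1) by (simp add: card_Diff_subset)
      show "card {\<sigma>\<in>Fset A x. \<sigma> i = j \<and> \<sigma> j = i} = ((card A - 2) choose x) * D (card A - 2 - x)"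
        using pair_count[OF i _ _, of j x] j card_Fset[of "A - {i,j}" x] c assms by auto
    qed
  qed
  also have "\<dots> = card A * (card A - 1) * ((card A - 2) choose x) * D (card A - 2 - x)"
    using assms by (simp add: card_Diff_singleton)
  finally show ?thesis .
qed

lemma even_invol:
  assumes "finite S" "\<And>i. i \<in> S \<Longrightarrow> f i \<in> S \<and> f i \<noteq> i \<and> f (f i) = i"
  shows "even (card S)"
  using assms
proof (induction "card S" arbitrary: S rule: less_induct)
  case less
  show ?case
  proof (cases "S = {}")
    case True then show ?thesis by simp
  next
    case False
    then obtain i where i: "i \<in> S" by auto
    let ?S = "S - {i, f i}"
    have fi: "f i \<in> S" "f i \<noteq> i" "f (f i) = i" using less(3)[OF i] by auto
    have c: "card ?S = card S - 2" using i fi less(2) by (simp add: card_Diff_subset)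
    have "card {i, f i} \<le> card S" using i fi less(2) by (intro card_mono) auto
    then have "card S \<ge> 2" using fi by simp
    have "even (card ?S)"
    proof (rule less(1))
      show "card ?S < card S" using c \<open>card S \<ge> 2\<close> by simp
      show "finite ?S" using less(2) by simp
      fix k assume k: "k \<in> ?S"
      have "f k \<in> S" "f k \<noteq> k" "f (f k) = k" using less(3)[of k] k by auto
      moreover have "f k \<noteq> i" using k fi \<open>f (f k) = k\<close> by auto
      moreover have "f k \<noteq> f i"
      proof
        assume "f k = f i"
        then have "k = i" using \<open>f (f k) = k\<close> fi(3) by metis
        then show False using k by auto
      qed
      ultimately show "f k \<in> ?S \<and> f k \<noteq> k \<and> f (f k) = k" by auto
    qed
    then show ?thesis using c \<open>card S \<ge> 2\<close> by (metis dvd_diff_nat even_numeral nat_dvd_not_less le_add_diff_inverse2 dvd_add)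
  qed
qed

lemma even_Q: "\<sigma> permutes A \<Longrightarrow> finite A \<Longrightarrow> even (card (Q A \<sigma>))"
  by (rule even_invol[of _ \<sigma>]) (auto simp: Q_def permutes_in_image)




lemma Fset_perms: "{\<sigma> \<in> perms N. eta1 N \<sigma> = x} = Fset {..<N} x"
  by (auto simp: perms_def eta1_def Fset_def)

lemma binom_id: "x + 2 \<le> N \<Longrightarrow> N * (N - 1) * ((N - 2) choose x) = (N choose x) * (N - x) * (N - x - 1)"
proof -
  assume a: "x + 2 \<le> N"
  have e1: "N * ((N - 1) choose x) = (N - x) * (N choose x)" using binomial_absorb_comp[of N x] by simp
  have e2: "(N - 1) * ((N - 2) choose x) = (N - 1 - x) * ((N - 1) choose x)"
    using binomial_absorb_comp[of "N - 1" x] by (simp add: diff_diff_add numeral_2_eq_2)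
  have "N * (N - 1) * ((N - 2) choose x) = N * ((N - 1 - x) * ((N - 1) choose x))" using e2 by (simp add: mult.assoc)
  also have "\<dots> = (N - 1 - x) * (N * ((N - 1) choose x))" by (simp add: mult_ac)
  also have "\<dots> = (N choose x) * (N - x) * (N - x - 1)" unfolding e1 by (simp add: mult_ac)
  finally show ?thesis .
qed

lemma pcond_abs:
  assumes "x + 5 \<le> N"
  shows "\<bar>1 - 2 * pcond N x\<bar> = real (N - x - 1) / real (D (N - x))"
proof -
  let ?A = "{..<N::nat}"
  have cA: "card ?A = N" by simp
  have F: "card (Fset ?A x) = (N choose x) * D (N - x)" using card_Fset[of ?A x] assms by simp
  have Fpos: "card (Fset ?A x) > 0" unfolding F using D_pos[of "N - x"] assms by simp
  have "(\<Sum>\<sigma>\<in>Fset ?A x. real (eta2 N \<sigma>)) = (\<Sum>\<sigma>\<in>Fset ?A x. real (card (Q ?A \<sigma>)) / 2)"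
  proof (rule sum.cong[OF refl])
    fix \<sigma> assume "\<sigma> \<in> Fset ?A x"
    then have "even (card (Q ?A \<sigma>))" by (intro even_Q) (auto simp: Fset_def)
    then show "real (eta2 N \<sigma>) = real (card (Q ?A \<sigma>)) / 2"
      by (auto simp: eta2_def Q_def elim!: evenE)
  qed
  also have "\<dots> = real (\<Sum>\<sigma>\<in>Fset ?A x. card (Q ?A \<sigma>)) / 2" by (simp add: sum_divide_distrib)
  also have "\<dots> = real (N * (N - 1) * ((N - 2) choose x) * D (N - 2 - x)) / 2"
    using sum_Q[of ?A x] assms by simp
  also have "\<dots> = real ((N choose x) * (N - x) * (N - x - 1) * D (N - 2 - x)) / 2"
    using binom_id[of x N] assms by simp
  finally have T: "(\<Sum>\<sigma>\<in>Fset ?A x. real (eta2 N \<sigma>)) = real ((N choose x) * (N - x) * (N - x - 1) * D (N - 2 - x)) / 2" .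
  have p: "pcond N x = real ((N choose x) * (N - x) * (N - x - 1) * D (N - 2 - x)) / 2 / real ((N choose x) * D (N - x))"
    unfolding pcond_def Fset_perms T F by simp
  define n where "n = N - x - 2"
  have n: "N - x = Suc (Suc n)" using assms by (simp add: n_def)
  have n2: "N - 2 - x = n" using n by simp
  have Dm: "D (Suc (Suc n)) > 0" using D_pos[of "Suc (Suc n)"] by simp
  have cpos: "real (N choose x) > 0" using assms by simp
  have "1 - 2 * pcond N x = (real (D (Suc (Suc n))) - real (Suc (Suc n)) * real (Suc n) * real (D n)) / real (D (Suc (Suc n)))"
    unfolding p n n2 using Dm cpos by (simp add: field_simps del: D.simps)
  also have "\<bar>\<dots>\<bar> = real (Suc n) / real (D (Suc (Suc n)))"
  proof -
    have "\<bar>real (D (Suc (Suc n))) - real (Suc (Suc n)) * real (Suc n) * real (D n)\<bar> = real (Suc n)"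
      using arg_cong[OF D_diff[of n], of real_of_int] by simp
    then show ?thesis by (simp add: abs_div_pos)
  qed
  finally show ?thesis using n by simp
qed

lemma pcond_nonneg: "pcond N x \<ge> 0"
  unfolding pcond_def by (intro divide_nonneg_nonneg sum_nonneg) auto

lemma zeta_le: "zeta N x \<le> 1 / fact x"
proof -
  let ?S = "(\<Sum>y\<le>N - 4. exp (-1) / fact y :: real)"
  have S: "?S \<ge> exp (-1)"
  proof -
    have "exp (-1) / fact 0 \<le> ?S" by (rule member_le_sum) auto
    then show ?thesis by simp
  qed
  have Sp: "?S > 0" using S by (simp add: order_less_le_trans[OF exp_gt_zero])
  have q: "exp (-1) / ?S \<le> 1" using S Sp by (simp add: divide_le_eq)
  show ?thesis
  proof (cases "x \<le> N - 4")
    case True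
    then have "zeta N x = (exp (-1) / ?S) * (1 / fact x)" by (simp add: zeta_def)
    also have "\<dots> \<le> 1 * (1 / fact x)" using q by (intro mult_right_mono) auto
    finally show ?thesis by simp
  qed (simp add: zeta_def)
qed

lemma zeta_nonneg: "zeta N x \<ge> 0"
  unfolding zeta_def by (auto intro!: divide_nonneg_nonneg sum_nonneg mult_nonneg_nonneg)

lemma term_bound:
  assumes "x + 5 \<le> N"
  shows "zeta N x * \<bar>Rup N x - Pup N x\<bar> \<le> 3 * real (N choose x) / (fact N * real N)"
proof -
  let ?m = "N - x"
  have N5: "N \<ge> 5" using assms by simp
  have NN: "real N * (real N - 1) > 0" using N5 by simp
  have "Rup N x - Pup N x = ((real N - real x - 1) - (real N - real x - 2 * pcond N x)) / (real N * (real N - 1))"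
    using assms by (simp add: Rup_def Pup_def diff_divide_distrib)
  also have "\<dots> = (2 * pcond N x - 1) / (real N * (real N - 1))" by simp
  finally have "Rup N x - Pup N x = (2 * pcond N x - 1) / (real N * (real N - 1))" .
  then have R: "\<bar>Rup N x - Pup N x\<bar> = real (?m - 1) / real (D ?m) / (real N * (real N - 1))"
    using pcond_abs[OF assms] NN by (simp add: abs_div_pos abs_minus_commute)
  have "3 * D ?m \<ge> fact ?m" by (rule D_lower) (use assms in simp)
  then have "real (3 * D ?m) \<ge> real (fact ?m)" by (simp only: of_nat_le_iff)
  then have Dm: "3 * real (D ?m) \<ge> fact ?m" by simp
  have Dpos: "real (D ?m) > 0" using D_pos[of ?m] assms by simp
  have bin: "real (N choose x) = fact N / (fact x * fact ?m)" using assms by (simp add: binomial_fact)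
  have "zeta N x * \<bar>Rup N x - Pup N x\<bar> \<le> (1 / fact x) * (real (?m - 1) / real (D ?m) / (real N * (real N - 1)))"
    unfolding R using zeta_le[of N x] NN Dpos by (intro mult_right_mono) auto
  also have "\<dots> \<le> (1 / fact x) * (real (?m - 1) * 3 / fact ?m / (real N * (real N - 1)))"
  proof -
    have "real (?m - 1) / real (D ?m) = real (?m - 1) * 3 / (3 * real (D ?m))" by simp
    also have "\<dots> \<le> real (?m - 1) * 3 / fact ?m"
      by (rule divide_left_mono) (use Dm Dpos in auto)
    finally have "real (?m - 1) / real (D ?m) \<le> real (?m - 1) * 3 / fact ?m" .
    then show ?thesis using NN by (intro mult_left_mono divide_right_mono) auto
  qed
  also have "\<dots> = 3 * real (N choose x) * real (?m - 1) / (fact N * (real N * (real N - 1)))"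
  proof -
    have f1: "fact x > (0::real)" "fact ?m > (0::real)" "fact N > (0::real)" by auto
    have f2: "real N > 0" "real N - 1 > 0" using N5 by auto
    show ?thesis unfolding bin using f1 f2 by (simp add: divide_simps)
  qed
  also have "\<dots> \<le> 3 * real (N choose x) * (real N - 1) / (fact N * (real N * (real N - 1)))"
    using NN assms by (intro divide_right_mono mult_left_mono) auto
  also have "\<dots> = 3 * real (N choose x) / (fact N * real N)"
  proof -
    have f2: "real N > 0" "real N - 1 > 0" "fact N > (0::real)" using N5 by auto
    then show ?thesis by (simp add: divide_simps)
  qed
  finally show ?thesis .
qed

lemma total_bound:
  assumes "N \<ge> 5"
  shows "(\<Sum>x\<le>N - 5. zeta N x * \<bar>Rup N x - Pup N x\<bar>) \<le> 2 ^ (N + 1) / fact N"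
proof -
  have "(\<Sum>x\<le>N - 5. zeta N x * \<bar>Rup N x - Pup N x\<bar>) \<le> (\<Sum>x\<le>N - 5. 3 * real (N choose x) / (fact N * real N))"
    using assms by (intro sum_mono term_bound) auto
  also have "\<dots> = 3 / (fact N * real N) * real (\<Sum>x\<le>N - 5. (N choose x))"
    by (simp add: sum_distrib_left)
  also have "\<dots> \<le> 3 / (fact N * real N) * real (\<Sum>x\<le>N. (N choose x))"
    by (intro mult_left_mono of_nat_mono sum_mono2) auto
  also have "\<dots> = 3 / (fact N * real N) * 2 ^ N" by (simp add: choose_row_sum)
  also have "\<dots> \<le> 2 ^ (N + 1) / fact N"
  proof -
    have "3 / real N \<le> 2" using assms by (simp add: field_simps)
    then have "3 / real N * 2 ^ N \<le> 2 * 2 ^ N" by (intro mult_right_mono) auto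
    then show ?thesis by (simp add: field_simps)
  qed
  finally show ?thesis .
qed




abbreviation mu :: "real measure" where "mu \<equiv> uniform_measure lborel {0..1}"

lemma mu_meas: "A \<in> sets borel \<Longrightarrow> measure mu A = measure lborel ({0..1} \<inter> A)"
  by (subst measure_uniform_measure) auto

lemma mu_lt: "0 \<le> a \<Longrightarrow> a \<le> 1 \<Longrightarrow> measure mu {u. u < a} = a"
proof -
  assume "0 \<le> a" "a \<le> 1"
  then have "{0..1} \<inter> {u. u < a} = {0..<a}" by auto
  then show ?thesis using \<open>0 \<le> a\<close> by (simp add: mu_meas)
qed

lemma mu_ival: "0 \<le> a \<Longrightarrow> a \<le> b \<Longrightarrow> b \<le> 1 \<Longrightarrow> measure mu {u. a \<le> u \<and> u < b} = b - a"
proof -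
  assume "0 \<le> a" "a \<le> b" "b \<le> 1"
  then have "{0..1} \<inter> {u. a \<le> u \<and> u < b} = {a..<b}" by auto
  then show ?thesis using \<open>a \<le> b\<close> by (simp add: mu_meas)
qed

lemma mu_ge: "0 \<le> b \<Longrightarrow> b \<le> 1 \<Longrightarrow> measure mu {u. b \<le> u} = 1 - b"
proof -
  assume "0 \<le> b" "b \<le> 1"
  then have "{0..1} \<inter> {u. b \<le> u} = {b..1}" by auto
  then show ?thesis using \<open>b \<le> 1\<close> by (simp add: mu_meas)
qed

lemma mu_ival_le: "a \<le> b \<Longrightarrow> measure mu {u. a \<le> u \<and> u < b} \<le> b - a"
proof -
  assume ab: "a \<le> b"
  have "measure mu {u. a \<le> u \<and> u < b} = measure lborel ({0..1} \<inter> {a..<b})"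
    by (simp add: mu_meas atLeastLessThan_def atLeast_def lessThan_def Collect_conj_eq)
  also have "\<dots> \<le> measure lborel {a..<b}"
    by (rule measure_mono_fmeasurable) (auto simp: fmeasurable_def ab)
  also have "\<dots> = b - a" using ab by simp
  finally show ?thesis .
qed

lemma mu_empty_if: "measure mu (if c then S else {}) = (if c then measure mu S else 0)"
  by simp


lemma step_meas: "(\<lambda>u::real. step dn up x u) \<in> measurable borel (count_space UNIV)"
  unfolding step_def by measurable

lemma kdown_le: assumes "N \<ge> 5" shows "kdown N z \<le> 5/16"
proof -
  have NN: "real N * (real N - 1) > 0" using assms by simp
  have "real z * (real N - real z) \<le> real N ^ 2 / 4"
    using sum_power2_ge_zero[of "real N - 2 * real z" 0] by (simp add: power2_eq_square algebra_simps)
  then have "kdown N z \<le> (real N ^ 2 / 4) / (real N * (real N - 1))"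
    unfolding kdown_def using NN by (intro divide_right_mono) auto
  also have "\<dots> \<le> 5 / 16" using assms NN by (simp add: field_simps power2_eq_square)
  finally show ?thesis .
qed

lemma kdown_nonneg: "z \<le> N \<Longrightarrow> N \<ge> 5 \<Longrightarrow> kdown N z \<ge> 0"
  unfolding kdown_def by (auto intro!: divide_nonneg_nonneg mult_nonneg_nonneg)

lemma Rup_bounds: assumes "N \<ge> 5" shows "Rup N z \<ge> 0" "Rup N z \<le> 1/4"
proof -
  have NN: "real N * (real N - 1) > 0" using assms by simp
  show "Rup N z \<ge> 0" unfolding Rup_def using NN by (auto intro!: divide_nonneg_nonneg)
  show "Rup N z \<le> 1/4"
  proof (cases "z + 5 \<le> N")
    case True
    have "Rup N z = (real N - real z - 1) / (real N * (real N - 1))" using True by (simp add: Rup_def)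
    also have "\<dots> \<le> (real N - 1) / (real N * (real N - 1))" using NN by (intro divide_right_mono) auto
    also have "\<dots> = 1 / real N"
    proof -
      have f: "real N > 0" "real N - 1 > 0" using assms by auto
      then show ?thesis by (simp add: divide_simps)
    qed
    also have "\<dots> \<le> 1/4" using assms by (simp add: field_simps)
    finally show ?thesis .
  qed (simp add: Rup_def)
qed

lemma Pup_le: assumes "N \<ge> 5" shows "Pup N z \<le> 1/4"
proof (cases "z + 5 \<le> N")
  case True
  have NN: "real N * (real N - 1) > 0" using assms by simp
  have "Pup N z = (real N - real z - 2 * pcond N z) / (real N * (real N - 1))" using True by (simp add: Pup_def)
  also have "\<dots> \<le> real N / (real N * (real N - 1))" using NN pcond_nonneg[of N z] by (intro divide_right_mono) auto
  also have "\<dots> = 1 / (real N - 1)"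
  proof -
    have f: "real N > 0" "real N - 1 > 0" using assms by auto
    then show ?thesis by (simp add: divide_simps)
  qed
  also have "\<dots> \<le> 1/4" using assms by (simp add: field_simps)
  finally show ?thesis .
qed (simp add: Pup_def)

lemma step_simp: "step dn up x u = (if u < dn x then x - 1 else if u < 1 - up x then x else x + 1)"
  unfolding step_def by simp

lemma cross:
  fixes dn P R :: "nat \<Rightarrow> real"
  assumes dn: "\<And>z. dn z \<le> 5/16" and P: "\<And>z. P z \<le> 1/4" and R: "\<And>z. R z \<le> 1/4"
    and c: "(x \<ge> y \<and> step dn P x u < step dn R y u) \<or> (x \<le> y \<and> step dn P x u > step dn R y u)"
  shows "x = y \<and> min (1 - P x) (1 - R x) \<le> u \<and> u < max (1 - P x) (1 - R x)"
proof -
  have a1: "dn x + R y < 1" "dn y + P x < 1" using dn[of x] dn[of y] P[of x] R[of y] by auto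
  have xy: "x = y"
  proof (rule ccontr)
    assume "x \<noteq> y"
    then consider "x = Suc y" | "y = Suc x" | "x \<ge> y + 2" | "y \<ge> x + 2" by linarith
    then show False
    proof cases
      case 1 then show False using c a1 unfolding step_simp by (auto split: if_splits)
    next
      case 2 then show False using c a1 unfolding step_simp by (auto split: if_splits)
    next
      case 3 then show False using c unfolding step_simp by (auto split: if_splits)
    next
      case 4 then show False using c unfolding step_simp by (auto split: if_splits)
    qed
  qed
  show ?thesis using c xy unfolding step_simp by (auto split: if_splits)
qed




lemma fm_mu: "finite_measure mu"
proof -
  have "prob_space mu" by (rule prob_space_uniform_measure) auto
  then show ?thesis by (rule prob_space.finite_measure)
qed

lemma mu_step:
  assumes N: "N \<ge> 5" and y: "y \<le> N - 4"
  shows "measure mu {u. step (kdown N) (Rup N) y u = x} =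
    (if x + 1 = y then kdown N y else 0) + (if x = y then 1 - kdown N y - Rup N y else 0) + (if x = y + 1 then Rup N y else 0)"
proof -
  let ?a = "kdown N y" and ?b = "1 - Rup N y"
  have a0: "0 \<le> ?a" using kdown_nonneg[of y N] y N by simp
  have ab: "?a \<le> ?b" using kdown_le[OF N, of y] Rup_bounds[OF N, of y] by simp
  have b1: "?b \<le> 1" "0 \<le> ?b" using Rup_bounds[OF N, of y] by auto
  have eq: "{u. step (kdown N) (Rup N) y u = x} =
     (if y - 1 = x then {u. u < ?a} else {}) \<union> ((if y = x then {u. ?a \<le> u \<and> u < ?b} else {}) \<union> (if y + 1 = x then {u. ?b \<le> u} else {}))"
    using ab by (auto simp: step_simp split: if_splits)
  interpret fm: finite_measure mu by (rule fm_mu)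
  have "measure mu {u. step (kdown N) (Rup N) y u = x} =
     measure mu (if y - 1 = x then {u. u < ?a} else {}) + (measure mu (if y = x then {u. ?a \<le> u \<and> u < ?b} else {}) + measure mu (if y + 1 = x then {u. ?b \<le> u} else {}))"
    unfolding eq
    by (subst fm.finite_measure_Union; (subst fm.finite_measure_Union)?) auto
  also have "\<dots> = (if y - 1 = x then ?a else 0) + ((if y = x then ?b - ?a else 0) + (if y + 1 = x then 1 - ?b else 0))"
  proof -
    have m1: "measure mu {u. u < ?a} = ?a" using a0 ab b1 by (intro mu_lt) auto
    have m2: "measure mu {u. ?a \<le> u \<and> u < ?b} = ?b - ?a" using a0 ab b1 by (intro mu_ival) auto
    have m3: "measure mu {u. ?b \<le> u} = 1 - ?b" using a0 ab b1 by (intro mu_ge) auto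
    show ?thesis by (simp only: mu_empty_if m1 m2 m3)
  qed
  also have "(if y - 1 = x then ?a else 0) = (if x + 1 = y then ?a else 0)"
    by (cases y) (auto simp: kdown_def)
  finally show ?thesis by simp
qed

lemma zeta_out: "\<not> x \<le> N - 4 \<Longrightarrow> zeta N x = 0" by (simp add: zeta_def)

lemma zeta_sum: "(\<Sum>y\<le>N - 4. zeta N y) = 1"
proof -
  let ?S = "(\<Sum>y\<le>N - 4. exp (-1) / fact y :: real)"
  have "?S \<ge> exp (-1) / fact 0" by (rule member_le_sum) auto
  then have Sp: "?S > 0" by (simp add: order_less_le_trans[OF exp_gt_zero])
  have "(\<Sum>y\<le>N - 4. zeta N y) = (\<Sum>y\<le>N - 4. (exp (-1) / fact y) / ?S)"
    by (rule sum.cong) (auto simp: zeta_def)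
  also have "\<dots> = ?S / ?S" by (simp only: sum_divide_distrib)
  finally show ?thesis using Sp by simp
qed

lemma DB: assumes N: "N \<ge> 5" shows "zeta N y * Rup N y = zeta N (y + 1) * kdown N (y + 1)"
proof (cases "y + 5 \<le> N")
  case True
  let ?S = "(\<Sum>y\<le>N - 4. exp (-1) / fact y :: real)"
  have "?S \<ge> exp (-1) / fact 0" by (rule member_le_sum) auto
  then have Sp: "?S > 0" by (simp add: order_less_le_trans[OF exp_gt_zero])
  have f: "real N > 0" "real N - 1 > 0" "fact y > (0::real)" using N by auto
  have z1: "zeta N y = (exp (-1) / fact y) / ?S" using True by (simp add: zeta_def)
  have z2: "zeta N (y+1) = (exp (-1) / (real (y+1) * fact y)) / ?S" using True by (simp add: zeta_def)
  show ?thesis unfolding z1 z2 using True f Sp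
    by (simp add: Rup_def kdown_def divide_simps of_nat_diff)
next
  case False
  then show ?thesis by (simp add: Rup_def zeta_def)
qed

lemma stat_sum:
  assumes N: "N \<ge> 5"
  shows "(\<Sum>y\<le>N - 4. zeta N y * ((if x + 1 = y then kdown N y else 0) + (if x = y then 1 - kdown N y - Rup N y else 0) + (if x = y + 1 then Rup N y else 0))) = zeta N x"
proof -
  have "(\<Sum>y\<le>N - 4. zeta N y * ((if x + 1 = y then kdown N y else 0) + (if x = y then 1 - kdown N y - Rup N y else 0) + (if x = y + 1 then Rup N y else 0)))
    = (\<Sum>y\<le>N - 4. (if y = x + 1 then zeta N y * kdown N y else 0)) + (\<Sum>y\<le>N - 4. (if y = x then zeta N y * (1 - kdown N y - Rup N y) else 0))
      + (\<Sum>y\<le>N - 4. (if x = y + 1 then zeta N y * Rup N y else 0))"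
    unfolding sum.distrib[symmetric] by (rule sum.cong) auto
  also have "(\<Sum>y\<le>N - 4. (if y = x + 1 then zeta N y * kdown N y else 0)) = zeta N x * Rup N x"
    using DB[OF N, of x] zeta_out[of "x+1" N] by (simp add: sum.delta')
  also have "(\<Sum>y\<le>N - 4. (if y = x then zeta N y * (1 - kdown N y - Rup N y) else 0)) = zeta N x * (1 - kdown N x - Rup N x)"
    using zeta_out[of x N] by (simp add: sum.delta')
  also have "(\<Sum>y\<le>N - 4. (if x = y + 1 then zeta N y * Rup N y else 0)) = zeta N x * kdown N x"
  proof (cases x)
    case 0 then show ?thesis by (simp add: kdown_def)
  next
    case (Suc z)
    have "(\<Sum>y\<le>N - 4. (if x = y + 1 then zeta N y * Rup N y else 0)) = (\<Sum>y\<le>N - 4. (if y = z then zeta N y * Rup N y else 0))"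
      using Suc by (intro sum.cong) auto
    also have "\<dots> = zeta N z * Rup N z" using zeta_out[of z N] by (simp add: sum.delta')
    also have "\<dots> = zeta N x * kdown N x" using DB[OF N, of z] Suc by simp
    finally show ?thesis .
  qed
  finally show ?thesis by (simp add: algebra_simps)
qed




lemma chain_Suc': "chain dn up x0 u (Suc k) = step dn up (chain dn up x0 u k) (u k)" by simp

lemma chain_cong: "(\<And>j. j < k \<Longrightarrow> u j = v j) \<Longrightarrow> chain dn up x0 u k = chain dn up x0 v k"
  by (induction k) auto

lemma chain_meas:
  assumes "\<And>i. i < k \<Longrightarrow> i \<in> I"
  shows "(\<lambda>u. chain dn up y0 u k) \<in> measurable (PiM I (\<lambda>_. borel)) (count_space UNIV)"
  using assms
proof (induction k)
  case 0 then show ?case by simp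
next
  case (Suc k)
  have IH: "(\<lambda>u. chain dn up y0 u k) \<in> measurable (PiM I (\<lambda>_. borel)) (count_space UNIV)"
    using Suc by auto
  have kI: "k \<in> I" using Suc by auto
  have f: "\<And>i::nat. (\<lambda>u. step dn up i (u k)) \<in> measurable (PiM I (\<lambda>_. borel)) (count_space UNIV)"
    using measurable_comp[OF measurable_component_singleton[OF kI] step_meas] by (simp add: comp_def)
  show ?case
    using measurable_compose_countable[where f="\<lambda>i u. step dn up i (u k)", OF f IH] by simp
qed

lemma (in prob_space) split_sum:
  fixes Z :: "'a \<Rightarrow> nat"
  assumes Zm: "Z \<in> measurable M (count_space UNIV)"
    and Z1: "(\<Sum>z\<le>L. prob {\<omega>\<in>space M. Z \<omega> = z}) = 1"
    and Pm: "{\<omega>\<in>space M. P \<omega>} \<in> sets M"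
  shows "prob {\<omega>\<in>space M. P \<omega>} = (\<Sum>z\<le>L. prob {\<omega>\<in>space M. Z \<omega> = z \<and> P \<omega>})"
proof -
  have Zs: "\<And>z. {\<omega>\<in>space M. Z \<omega> = z} \<in> sets M" using Zm by measurable
  have ZPs: "\<And>z. {\<omega>\<in>space M. Z \<omega> = z \<and> P \<omega>} \<in> sets M"
  proof -
    fix z
    have "{\<omega>\<in>space M. Z \<omega> = z \<and> P \<omega>} = {\<omega>\<in>space M. Z \<omega> = z} \<inter> {\<omega>\<in>space M. P \<omega>}" by auto
    then show "{\<omega>\<in>space M. Z \<omega> = z \<and> P \<omega>} \<in> sets M" using Zs Pm by auto
  qed
  have U1: "{\<omega>\<in>space M. Z \<omega> \<le> L} = (\<Union>z\<in>{..L}. {\<omega>\<in>space M. Z \<omega> = z})" by auto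
  have "prob {\<omega>\<in>space M. Z \<omega> \<le> L} = 1"
    unfolding U1 using Z1 Zs
    by (subst finite_measure_finite_Union) (auto simp: disjoint_family_on_def)
  then have AE: "AE \<omega> in M. \<omega> \<in> {\<omega>\<in>space M. Z \<omega> \<le> L}" by (rule AE_prob_1)
  have U2: "{\<omega>\<in>space M. P \<omega> \<and> Z \<omega> \<le> L} = (\<Union>z\<in>{..L}. {\<omega>\<in>space M. Z \<omega> = z \<and> P \<omega>})" by auto
  have "prob {\<omega>\<in>space M. P \<omega>} = prob {\<omega>\<in>space M. P \<omega> \<and> Z \<omega> \<le> L}"
  proof (rule measure_eq_AE)
    show "AE x in M. (x \<in> {\<omega> \<in> space M. P \<omega>}) = (x \<in> {\<omega> \<in> space M. P \<omega> \<and> Z \<omega> \<le> L})"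
      using AE by eventually_elim auto
    show "{\<omega> \<in> space M. P \<omega>} \<in> sets M" by (rule Pm)
    show "{\<omega> \<in> space M. P \<omega> \<and> Z \<omega> \<le> L} \<in> sets M" unfolding U2 using ZPs by auto
  qed
  also have "\<dots> = (\<Sum>z\<le>L. prob {\<omega>\<in>space M. Z \<omega> = z \<and> P \<omega>})"
    unfolding U2 using ZPs
    by (subst finite_measure_finite_Union) (auto simp: disjoint_family_on_def)
  finally show ?thesis .
qed

locale chainsetup = prob_space M for M :: "'a measure" +
  fixes N :: nat and Y0 :: "'a \<Rightarrow> nat" and U :: "nat \<Rightarrow> 'a \<Rightarrow> real" and Y :: "nat \<Rightarrow> 'a \<Rightarrow> nat"
  assumes N5: "N \<ge> 5"
  and Y0m: "Y0 \<in> measurable M (count_space UNIV)"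
  and Y0d: "\<And>x. prob {\<omega>\<in>space M. Y0 \<omega> = x} = zeta N x"
  and indU: "indep_vars (\<lambda>_. borel) U UNIV"
  and distU: "\<And>k. distr M borel (U k) = mu"
  and hyp9: "\<And>y0 B. B \<in> sets (PiM UNIV (\<lambda>_. (borel :: real measure))) \<Longrightarrow>
      prob {\<omega>\<in>space M. Y0 \<omega> = y0 \<and> (\<lambda>k. U k \<omega>) \<in> B} = prob {\<omega>\<in>space M. Y0 \<omega> = y0} * prob {\<omega>\<in>space M. (\<lambda>k. U k \<omega>) \<in> B}"
  and Ydef: "\<And>k \<omega>. Y k \<omega> = chain (kdown N) (Rup N) (Y0 \<omega>) (\<lambda>j. U j \<omega>) k"
begin

lemma Um: "U k \<in> borel_measurable M"
  using indU unfolding indep_vars_def by auto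

lemma Ym: "Y k \<in> measurable M (count_space UNIV)"
proof (induction k)
  case 0
  have "Y 0 = Y0" by (auto simp: Ydef)
  then show ?case using Y0m by simp
next
  case (Suc k)
  have e: "Y (Suc k) = (\<lambda>\<omega>. step (kdown N) (Rup N) (Y k \<omega>) (U k \<omega>))" by (auto simp: Ydef)
  have f: "\<And>i::nat. (\<lambda>\<omega>. step (kdown N) (Rup N) i (U k \<omega>)) \<in> measurable M (count_space UNIV)"
    using measurable_comp[OF Um step_meas] by (simp add: comp_def)
  show ?case unfolding e
    using measurable_compose_countable[where f="\<lambda>i \<omega>. step (kdown N) (Rup N) i (U k \<omega>)", OF f Suc] by simp
qed

lemma Uvm: "(\<lambda>\<omega> k. U k \<omega>) \<in> measurable M (PiM UNIV (\<lambda>_. borel))"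
  by (rule measurable_PiM_single') (auto simp: Um)

lemma prob_U: "B \<in> sets borel \<Longrightarrow> prob {\<omega>\<in>space M. U k \<omega> \<in> B} = measure mu B"
proof -
  assume B: "B \<in> sets borel"
  have "measure mu B = measure (distr M borel (U k)) B" by (simp add: distU)
  also have "\<dots> = measure M (U k -` B \<inter> space M)" using B Um by (simp add: measure_distr)
  also have "U k -` B \<inter> space M = {\<omega>\<in>space M. U k \<omega> \<in> B}" by auto
  finally show ?thesis by simp
qed

lemma indep_W:
  assumes B: "B \<in> sets borel"
  shows "prob {\<omega>\<in>space M. chain (kdown N) (Rup N) y0 (\<lambda>j. U j \<omega>) k = y \<and> U k \<omega> \<in> B}
       = prob {\<omega>\<in>space M. chain (kdown N) (Rup N) y0 (\<lambda>j. U j \<omega>) k = y} * prob {\<omega>\<in>space M. U k \<omega> \<in> B}"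
proof -
  let ?V1 = "\<lambda>\<omega>. restrict (\<lambda>i. U i \<omega>) {..<k}" and ?V2 = "\<lambda>\<omega>. restrict (\<lambda>i. U i \<omega>) {k}"
  have iv: "indep_var (PiM {..<k} (\<lambda>_. borel)) ?V1 (PiM {k} (\<lambda>_. borel)) ?V2"
    by (rule indep_var_restrict[OF indU]) auto
  let ?Xa = "{v \<in> space (PiM {..<k} (\<lambda>_. borel)). chain (kdown N) (Rup N) y0 v k = y}"
  let ?Xb = "{v \<in> space (PiM {k} (\<lambda>_. (borel::real measure))). v k \<in> B}"
  have Xa: "?Xa \<in> sets (PiM {..<k} (\<lambda>_. borel))"
    using chain_meas[of k "{..<k}" "kdown N" "Rup N" y0] by measurable
  have Xb: "?Xb \<in> sets (PiM {k} (\<lambda>_. (borel::real measure)))"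
    using B by measurable
  have ind: "prob ((\<lambda>x. (?V1 x, ?V2 x)) -` (?Xa \<times> ?Xb) \<inter> space M) = prob (?V1 -` ?Xa \<inter> space M) * prob (?V2 -` ?Xb \<inter> space M)"
    by (rule indep_varD[OF iv Xa Xb])
  have cc: "\<And>\<omega>. chain (kdown N) (Rup N) y0 (?V1 \<omega>) k = chain (kdown N) (Rup N) y0 (\<lambda>j. U j \<omega>) k"
    by (rule chain_cong) simp
  have e1: "(\<lambda>x. (?V1 x, ?V2 x)) -` (?Xa \<times> ?Xb) \<inter> space M = {\<omega>\<in>space M. chain (kdown N) (Rup N) y0 (\<lambda>j. U j \<omega>) k = y \<and> U k \<omega> \<in> B}"
    by (auto simp: space_PiM cc)
  have e2: "?V1 -` ?Xa \<inter> space M = {\<omega>\<in>space M. chain (kdown N) (Rup N) y0 (\<lambda>j. U j \<omega>) k = y}"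
    by (auto simp: space_PiM intro: chain_cong)
  have e3: "?V2 -` ?Xb \<inter> space M = {\<omega>\<in>space M. U k \<omega> \<in> B}"
    by (auto simp: space_PiM)
  show ?thesis using ind unfolding e1 e2 e3 .
qed

end




context chainsetup begin

lemma Y0sum: "(\<Sum>z\<le>N - 4. prob {\<omega>\<in>space M. Y0 \<omega> = z}) = 1"
  using zeta_sum[of N] by (simp add: Y0d)

lemma sets_PiM_UNIV: "(\<lambda>u. chain dn up z u k) \<in> measurable (PiM UNIV (\<lambda>_. borel)) (count_space UNIV)"
  by (rule chain_meas) auto

lemma C_sets:
  assumes B: "B \<in> sets borel"
  shows "{u. chain (kdown N) (Rup N) z u k = y \<and> u k \<in> B} \<in> sets (PiM UNIV (\<lambda>_. (borel :: real measure)))"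
proof -
  have "{u. chain (kdown N) (Rup N) z u k = y \<and> u k \<in> B} = {u \<in> space (PiM UNIV (\<lambda>_. (borel :: real measure))). chain (kdown N) (Rup N) z u k = y \<and> u k \<in> B}"
    by (auto simp: space_PiM)
  also have "\<dots> \<in> sets (PiM UNIV (\<lambda>_. (borel :: real measure)))"
    using sets_PiM_UNIV[of "kdown N" "Rup N" z k] B by measurable
  finally show ?thesis .
qed

lemma C_sets': "{u. chain (kdown N) (Rup N) z u k = y} \<in> sets (PiM UNIV (\<lambda>_. (borel :: real measure)))"
  using C_sets[of UNIV z k y] by simp

lemma indepY:
  assumes B: "B \<in> sets borel"
  shows "prob {\<omega>\<in>space M. Y k \<omega> = y \<and> U k \<omega> \<in> B} = prob {\<omega>\<in>space M. Y k \<omega> = y} * prob {\<omega>\<in>space M. U k \<omega> \<in> B}"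
proof -
  have m1: "{\<omega>\<in>space M. Y k \<omega> = y \<and> U k \<omega> \<in> B} \<in> sets M"
    using Ym[of k] Um[of k] B by measurable
  have m2: "{\<omega>\<in>space M. Y k \<omega> = y} \<in> sets M"
    using Ym[of k] by measurable
  have "prob {\<omega>\<in>space M. Y k \<omega> = y \<and> U k \<omega> \<in> B} = (\<Sum>z\<le>N - 4. prob {\<omega>\<in>space M. Y0 \<omega> = z \<and> (Y k \<omega> = y \<and> U k \<omega> \<in> B)})"
    by (rule split_sum[OF Y0m Y0sum m1])
  also have "\<dots> = (\<Sum>z\<le>N - 4. prob {\<omega>\<in>space M. Y0 \<omega> = z \<and> Y k \<omega> = y} * prob {\<omega>\<in>space M. U k \<omega> \<in> B})"
  proof (rule sum.cong[OF refl])
    fix z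
    have "{\<omega>\<in>space M. Y0 \<omega> = z \<and> (Y k \<omega> = y \<and> U k \<omega> \<in> B)} = {\<omega>\<in>space M. Y0 \<omega> = z \<and> (\<lambda>j. U j \<omega>) \<in> {u. chain (kdown N) (Rup N) z u k = y \<and> u k \<in> B}}"
      by (auto simp: Ydef)
    then have "prob {\<omega>\<in>space M. Y0 \<omega> = z \<and> (Y k \<omega> = y \<and> U k \<omega> \<in> B)} = prob {\<omega>\<in>space M. Y0 \<omega> = z} * prob {\<omega>\<in>space M. (\<lambda>j. U j \<omega>) \<in> {u. chain (kdown N) (Rup N) z u k = y \<and> u k \<in> B}}"
      using hyp9[OF C_sets[OF B]] by simp
    also have "prob {\<omega>\<in>space M. (\<lambda>j. U j \<omega>) \<in> {u. chain (kdown N) (Rup N) z u k = y \<and> u k \<in> B}} = prob {\<omega>\<in>space M. chain (kdown N) (Rup N) z (\<lambda>j. U j \<omega>) k = y \<and> U k \<omega> \<in> B}"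
      by simp
    also have "\<dots> = prob {\<omega>\<in>space M. chain (kdown N) (Rup N) z (\<lambda>j. U j \<omega>) k = y} * prob {\<omega>\<in>space M. U k \<omega> \<in> B}"
      by (rule indep_W[OF B])
    also have "prob {\<omega>\<in>space M. chain (kdown N) (Rup N) z (\<lambda>j. U j \<omega>) k = y} = prob {\<omega>\<in>space M. (\<lambda>j. U j \<omega>) \<in> {u. chain (kdown N) (Rup N) z u k = y}}"
      by simp
    finally have e1: "prob {\<omega>\<in>space M. Y0 \<omega> = z \<and> (Y k \<omega> = y \<and> U k \<omega> \<in> B)} = prob {\<omega>\<in>space M. Y0 \<omega> = z} * prob {\<omega>\<in>space M. (\<lambda>j. U j \<omega>) \<in> {u. chain (kdown N) (Rup N) z u k = y}} * prob {\<omega>\<in>space M. U k \<omega> \<in> B}"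
      by (simp add: mult.assoc)
    have "{\<omega>\<in>space M. Y0 \<omega> = z \<and> Y k \<omega> = y} = {\<omega>\<in>space M. Y0 \<omega> = z \<and> (\<lambda>j. U j \<omega>) \<in> {u. chain (kdown N) (Rup N) z u k = y}}"
      by (auto simp: Ydef)
    then have e2: "prob {\<omega>\<in>space M. Y0 \<omega> = z \<and> Y k \<omega> = y} = prob {\<omega>\<in>space M. Y0 \<omega> = z} * prob {\<omega>\<in>space M. (\<lambda>j. U j \<omega>) \<in> {u. chain (kdown N) (Rup N) z u k = y}}"
      using hyp9[OF C_sets'] by simp
    show "prob {\<omega>\<in>space M. Y0 \<omega> = z \<and> (Y k \<omega> = y \<and> U k \<omega> \<in> B)} = prob {\<omega>\<in>space M. Y0 \<omega> = z \<and> Y k \<omega> = y} * prob {\<omega>\<in>space M. U k \<omega> \<in> B}"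
      unfolding e1 e2 ..
  qed
  also have "\<dots> = (\<Sum>z\<le>N - 4. prob {\<omega>\<in>space M. Y0 \<omega> = z \<and> Y k \<omega> = y}) * prob {\<omega>\<in>space M. U k \<omega> \<in> B}"
    by (simp add: sum_distrib_right)
  also have "(\<Sum>z\<le>N - 4. prob {\<omega>\<in>space M. Y0 \<omega> = z \<and> Y k \<omega> = y}) = prob {\<omega>\<in>space M. Y k \<omega> = y}"
    by (rule split_sum[OF Y0m Y0sum m2, symmetric])
  finally show ?thesis .
qed

lemma stationary: "prob {\<omega>\<in>space M. Y k \<omega> = x} = zeta N x"
proof (induction k arbitrary: x)
  case 0
  have "\<And>\<omega>. Y 0 \<omega> = Y0 \<omega>" by (simp add: Ydef)
  then show ?case by (simp add: Y0d)
next
  case (Suc k)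
  have sum1: "(\<Sum>y\<le>N - 4. prob {\<omega>\<in>space M. Y k \<omega> = y}) = 1" using zeta_sum[of N] Suc by simp
  have m: "{\<omega>\<in>space M. Y (Suc k) \<omega> = x} \<in> sets M" using Ym[of "Suc k"] by measurable
  have YS: "\<And>\<omega>. Y (Suc k) \<omega> = step (kdown N) (Rup N) (Y k \<omega>) (U k \<omega>)" by (simp add: Ydef)
  have "prob {\<omega>\<in>space M. Y (Suc k) \<omega> = x} = (\<Sum>y\<le>N - 4. prob {\<omega>\<in>space M. Y k \<omega> = y \<and> Y (Suc k) \<omega> = x})"
    by (rule split_sum[OF Ym sum1 m])
  also have "\<dots> = (\<Sum>y\<le>N - 4. zeta N y * ((if x + 1 = y then kdown N y else 0) + (if x = y then 1 - kdown N y - Rup N y else 0) + (if x = y + 1 then Rup N y else 0)))"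
  proof (rule sum.cong[OF refl])
    fix y assume y: "y \<in> {..N - 4}"
    have Sb: "{u. step (kdown N) (Rup N) y u = x} \<in> sets borel"
    proof -
      have "{u. step (kdown N) (Rup N) y u = x} = (\<lambda>u. step (kdown N) (Rup N) y u) -` {x} \<inter> space borel" by auto
      also have "\<dots> \<in> sets borel" using step_meas by (rule measurable_sets) auto
      finally show ?thesis .
    qed
    have "{\<omega>\<in>space M. Y k \<omega> = y \<and> Y (Suc k) \<omega> = x} = {\<omega>\<in>space M. Y k \<omega> = y \<and> U k \<omega> \<in> {u. step (kdown N) (Rup N) y u = x}}"
      by (auto simp: YS)
    then have "prob {\<omega>\<in>space M. Y k \<omega> = y \<and> Y (Suc k) \<omega> = x} = zeta N y * measure mu {u. step (kdown N) (Rup N) y u = x}"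
      using indepY[OF Sb, of k y] prob_U[OF Sb, of k] Suc by simp
    also have "\<dots> = zeta N y * ((if x + 1 = y then kdown N y else 0) + (if x = y then 1 - kdown N y - Rup N y else 0) + (if x = y + 1 then Rup N y else 0))"
      using mu_step[OF N5, of y x] y by simp
    finally show "prob {\<omega>\<in>space M. Y k \<omega> = y \<and> Y (Suc k) \<omega> = x} = \<dots>" .
  qed
  also have "\<dots> = zeta N x" by (rule stat_sum[OF N5])
  finally show ?case .
qed

end




context chainsetup begin

lemma final:
  fixes X :: "nat \<Rightarrow> 'a \<Rightarrow> nat" and Cd :: "nat \<Rightarrow> 'a \<Rightarrow> bool"
  assumes XS: "\<And>k \<omega>. X (Suc k) \<omega> = step (kdown N) (Pup N) (X k \<omega>) (U k \<omega>)"
  and Cd: "\<And>k \<omega>. Cd k \<omega> \<Longrightarrow> (X k \<omega> \<ge> Y k \<omega> \<and> X (Suc k) \<omega> < Y (Suc k) \<omega>) \<or> (X k \<omega> \<le> Y k \<omega> \<and> X (Suc k) \<omega> > Y (Suc k) \<omega>)"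
  shows "measure M {\<omega>\<in>space M. (\<Sum>k<n. (if Cd k \<omega> then 1 else 0 :: nat)) > 0} \<le> 2 ^ (N + 1) * real n / fact N"
proof -
  define I where "I x = {u::real. min (1 - Pup N x) (1 - Rup N x) \<le> u \<and> u < max (1 - Pup N x) (1 - Rup N x)}" for x
  define E where "E k x = {\<omega>\<in>space M. Y k \<omega> = x \<and> U k \<omega> \<in> I x}" for k x
  have YS: "\<And>k \<omega>. Y (Suc k) \<omega> = step (kdown N) (Rup N) (Y k \<omega>) (U k \<omega>)" by (simp add: Ydef)
  have Ib: "\<And>x. I x \<in> sets borel" unfolding I_def by measurable
  have Es: "\<And>k x. E k x \<in> sets M"
  proof -
    fix k x
    have "E k x = (Y k -` {x} \<inter> space M) \<inter> (U k -` I x \<inter> space M)" by (auto simp: E_def)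
    also have "\<dots> \<in> sets M"
      by (intro sets.Int measurable_sets[OF Ym] measurable_sets[OF Um] Ib) auto
    finally show "E k x \<in> sets M" .
  qed
  have sub: "{\<omega>\<in>space M. (\<Sum>k<n. (if Cd k \<omega> then 1 else 0 :: nat)) > 0} \<subseteq> (\<Union>k\<in>{..<n}. \<Union>x\<in>{..N - 5}. E k x)"
  proof
    fix \<omega> assume w: "\<omega> \<in> {\<omega>\<in>space M. (\<Sum>k<n. (if Cd k \<omega> then 1 else 0 :: nat)) > 0}"
    then have ws: "\<omega> \<in> space M" and wp: "(\<Sum>k<n. (if Cd k \<omega> then 1 else 0 :: nat)) > 0" by auto
    have "\<exists>k<n. Cd k \<omega>"
    proof (rule ccontr)
      assume "\<not> (\<exists>k<n. Cd k \<omega>)"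
      then have "(\<Sum>k<n. (if Cd k \<omega> then 1 else 0 :: nat)) = 0" by (intro sum.neutral) auto
      then show False using wp by simp
    qed
    then obtain k where k: "k < n" "Cd k \<omega>" by blast
    have cr: "X k \<omega> = Y k \<omega> \<and> min (1 - Pup N (X k \<omega>)) (1 - Rup N (X k \<omega>)) \<le> U k \<omega> \<and> U k \<omega> < max (1 - Pup N (X k \<omega>)) (1 - Rup N (X k \<omega>))"
    proof (rule cross)
      show "\<And>z. kdown N z \<le> 5 / 16" using kdown_le[OF N5] .
      show "\<And>z. Pup N z \<le> 1 / 4" using Pup_le[OF N5] .
      show "\<And>z. Rup N z \<le> 1 / 4" using Rup_bounds(2)[OF N5] .
      show "(Y k \<omega> \<le> X k \<omega> \<and> step (kdown N) (Pup N) (X k \<omega>) (U k \<omega>) < step (kdown N) (Rup N) (Y k \<omega>) (U k \<omega>)) \<or>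
            (X k \<omega> \<le> Y k \<omega> \<and> step (kdown N) (Rup N) (Y k \<omega>) (U k \<omega>) < step (kdown N) (Pup N) (X k \<omega>) (U k \<omega>))"
        using Cd[OF k(2)] unfolding XS YS .
    qed
    have x5: "X k \<omega> \<le> N - 5"
    proof (rule ccontr)
      assume "\<not> X k \<omega> \<le> N - 5"
      then have "\<not> X k \<omega> + 5 \<le> N" by simp
      then have p0: "Pup N (X k \<omega>) = 0" "Rup N (X k \<omega>) = 0" by (simp_all add: Pup_def Rup_def)
      have "min (1 - Pup N (X k \<omega>)) (1 - Rup N (X k \<omega>)) < max (1 - Pup N (X k \<omega>)) (1 - Rup N (X k \<omega>))"
        using cr by linarith
      then show False unfolding p0 by simp
    qed
    have eq: "Y k \<omega> = X k \<omega>" using cr by simp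
    have "\<omega> \<in> E k (X k \<omega>)" unfolding E_def I_def using cr ws by (simp add: eq)
    then show "\<omega> \<in> (\<Union>k\<in>{..<n}. \<Union>x\<in>{..N - 5}. E k x)"
      using k(1) x5 by blast
  qed
  have "measure M {\<omega>\<in>space M. (\<Sum>k<n. (if Cd k \<omega> then 1 else 0 :: nat)) > 0} \<le> measure M (\<Union>k\<in>{..<n}. \<Union>x\<in>{..N - 5}. E k x)"
    using sub Es by (intro finite_measure_mono) auto
  also have "\<dots> \<le> (\<Sum>k<n. measure M (\<Union>x\<in>{..N - 5}. E k x))"
    using Es by (intro measure_UNION_le) auto
  also have "\<dots> \<le> (\<Sum>k<n. \<Sum>x\<le>N - 5. measure M (E k x))"
    using Es by (intro sum_mono measure_UNION_le) auto
  also have "\<dots> \<le> (\<Sum>k<n. \<Sum>x\<le>N - 5. zeta N x * \<bar>Rup N x - Pup N x\<bar>)"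
  proof (intro sum_mono)
    fix k x
    have "measure M (E k x) = zeta N x * measure mu (I x)"
      unfolding E_def using indepY[OF Ib, of k x] stationary[of k x] prob_U[OF Ib, of k] by simp
    also have "\<dots> \<le> zeta N x * \<bar>Rup N x - Pup N x\<bar>"
    proof (rule mult_left_mono)
      have "measure mu (I x) \<le> max (1 - Pup N x) (1 - Rup N x) - min (1 - Pup N x) (1 - Rup N x)"
        unfolding I_def by (rule mu_ival_le) simp
      also have "\<dots> = \<bar>Rup N x - Pup N x\<bar>" by (simp add: max_def min_def abs_if)
      finally show "measure mu (I x) \<le> \<bar>Rup N x - Pup N x\<bar>" .
      show "0 \<le> zeta N x" by (rule zeta_nonneg)
    qed
    finally show "measure M (E k x) \<le> zeta N x * \<bar>Rup N x - Pup N x\<bar>" .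
  qed
  also have "\<dots> \<le> (\<Sum>k<n. 2 ^ (N + 1) / fact N)"
    by (intro sum_mono total_bound[OF N5])
  also have "\<dots> = 2 ^ (N + 1) * real n / fact N" by simp
  finally show ?thesis .
qed

end




theorem lemma5p6:
  fixes M :: "'a measure" and N n :: nat
    and X0 Y0 :: "'a \<Rightarrow> nat" and U :: "nat \<Rightarrow> 'a \<Rightarrow> real"
    and X Y :: "nat \<Rightarrow> 'a \<Rightarrow> nat"
  assumes "prob_space M"
    and "N \<ge> 5"
    and "X0 \<in> measurable M (count_space UNIV)"
    and "Y0 \<in> measurable M (count_space UNIV)"
    and "\<forall>x. prob_space.prob M {\<omega> \<in> space M. X0 \<omega> = x} = checkpi N x"
    and "\<forall>x. prob_space.prob M {\<omega> \<in> space M. Y0 \<omega> = x} = zeta N x"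
    and "prob_space.indep_vars M (\<lambda>_. borel) U UNIV"
    and "\<forall>k. distr M borel (U k) = uniform_measure lborel {0..1}"
    and "\<forall>A B. B \<in> sets (PiM UNIV (\<lambda>_. (borel :: real measure))) \<longrightarrow>
           prob_space.prob M {\<omega> \<in> space M. (X0 \<omega>, Y0 \<omega>) \<in> A \<and> (\<lambda>k. U k \<omega>) \<in> B}
           = prob_space.prob M {\<omega> \<in> space M. (X0 \<omega>, Y0 \<omega>) \<in> A}
             * prob_space.prob M {\<omega> \<in> space M. (\<lambda>k. U k \<omega>) \<in> B}"
    and "\<forall>k \<omega>. X k \<omega> = chain (kdown N) (Pup N) (X0 \<omega>) (\<lambda>j. U j \<omega>) k"
    and "\<forall>k \<omega>. Y k \<omega> = chain (kdown N) (Rup N) (Y0 \<omega>) (\<lambda>j. U j \<omega>) k"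
  shows "measure M {\<omega> \<in> space M.
             (\<Sum>k<n. (if X k \<omega> \<ge> Y k \<omega> \<and> X (Suc k) \<omega> < Y (Suc k) \<omega> then 1 else 0 :: nat)) > 0}
           \<le> 2 ^ (N + 1) * real n / fact N
       \<and> measure M {\<omega> \<in> space M.
             (\<Sum>k<n. (if X k \<omega> \<le> Y k \<omega> \<and> X (Suc k) \<omega> > Y (Suc k) \<omega> then 1 else 0 :: nat)) > 0}
           \<le> 2 ^ (N + 1) * real n / fact N"
proof -
  have cs: "chainsetup M N Y0 U Y"
  proof (unfold chainsetup_def chainsetup_axioms_def, intro conjI allI impI)
    show "prob_space M" by (rule assms(1))
    show "5 \<le> N" by (rule assms(2))
    show "Y0 \<in> measurable M (count_space UNIV)" by (rule assms(4))
    show "\<And>x. measure M {\<omega> \<in> space M. Y0 \<omega> = x} = zeta N x" using assms(6) by simp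
    show "prob_space.indep_vars M (\<lambda>_. borel) U UNIV" by (rule assms(7))
    show "\<And>k. distr M borel (U k) = mu" using assms(8) by simp
    show "\<And>y0 B. B \<in> sets (PiM UNIV (\<lambda>_. (borel :: real measure))) \<Longrightarrow>
      measure M {\<omega>\<in>space M. Y0 \<omega> = y0 \<and> (\<lambda>k. U k \<omega>) \<in> B} = measure M {\<omega>\<in>space M. Y0 \<omega> = y0} * measure M {\<omega>\<in>space M. (\<lambda>k. U k \<omega>) \<in> B}"
    proof -
      fix y0 B assume B: "B \<in> sets (PiM (UNIV :: nat set) (\<lambda>_. (borel :: real measure)))"
      have e1: "{\<omega>\<in>space M. (X0 \<omega>, Y0 \<omega>) \<in> {p. snd p = y0} \<and> (\<lambda>k. U k \<omega>) \<in> B} = {\<omega>\<in>space M. Y0 \<omega> = y0 \<and> (\<lambda>k. U k \<omega>) \<in> B}" by auto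
      have e2: "{\<omega>\<in>space M. (X0 \<omega>, Y0 \<omega>) \<in> {p. snd p = y0}} = {\<omega>\<in>space M. Y0 \<omega> = y0}" by auto
      show "measure M {\<omega>\<in>space M. Y0 \<omega> = y0 \<and> (\<lambda>k. U k \<omega>) \<in> B} = measure M {\<omega>\<in>space M. Y0 \<omega> = y0} * measure M {\<omega>\<in>space M. (\<lambda>k. U k \<omega>) \<in> B}"
        using assms(9) B unfolding e1[symmetric] e2[symmetric] by blast
    qed
    show "\<And>k \<omega>. Y k \<omega> = chain (kdown N) (Rup N) (Y0 \<omega>) (\<lambda>j. U j \<omega>) k" using assms(11) by simp
  qed
  interpret cs: chainsetup M N Y0 U Y by (rule cs)
  have XS: "\<And>k \<omega>. X (Suc k) \<omega> = step (kdown N) (Pup N) (X k \<omega>) (U k \<omega>)" using assms(10) by simp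
  have h1: "measure M {\<omega> \<in> space M.
             (\<Sum>k<n. (if X k \<omega> \<ge> Y k \<omega> \<and> X (Suc k) \<omega> < Y (Suc k) \<omega> then 1 else 0 :: nat)) > 0}
           \<le> 2 ^ (N + 1) * real n / fact N"
    using cs.final[OF XS, where Cd="\<lambda>k \<omega>. X k \<omega> \<ge> Y k \<omega> \<and> X (Suc k) \<omega> < Y (Suc k) \<omega>"] by blast
  have h2: "measure M {\<omega> \<in> space M.
             (\<Sum>k<n. (if X k \<omega> \<le> Y k \<omega> \<and> X (Suc k) \<omega> > Y (Suc k) \<omega> then 1 else 0 :: nat)) > 0}
           \<le> 2 ^ (N + 1) * real n / fact N"
    using cs.final[OF XS, where Cd="\<lambda>k \<omega>. X k \<omega> \<le> Y k \<omega> \<and> X (Suc k) \<omega> > Y (Suc k) \<omega>"] by blast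
  show ?thesis using h1 h2 by blast
qed



end
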